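(* Let $X$ be a proper geodesic metric space. If $X$ is Morse-dichotomous, then $\partial_* X$ is strongly $\sigma$-compact.
   Context: A Morse gauge is a non-decreasing continuous $M:\mathbb{R}_{\ge1}\to\mathbb{R}_{\ge0}$; a quasi-geodesic $\gamma$ is $M$--Morse if every $Q$--quasi-geodesic with endpoints $\gamma(s),\gamma(t)$ lies in the closed $M(Q)$--neighbourhood of $\gamma[s,t]$. A geodesic $\gamma$ is $C$--contracting if for every $x\in X$ the closest-point projection to $\gamma$ of the ball $B_{d(x,\gamma)}(x)$ has diameter at most $C$. $X$ is Morse-dichotomous if the converse of "contracting implies Morse" holds: for every Morse gauge $M$ there is $C$ such that every $M$--Morse geodesic is $C$--contracting. With basepoint $x_0$, $\partial_*X$ is the set of Morse geodesic rays from $x_0$ up to bounded Hausdorff distance, and $\partial^M_{x_0}X$ the subset represented by $M$--Morse rays from $x_0$. $\partial_*X$ is strongly $\sigma$-compact if there is an increasing sequence of Morse gauges $(M_n)$ with $\partial_*X=\bigcup_n\partial^{M_n}_{x_0}X$ such that for every Morse gauge $M$ there is $n$ with $\partial^M_{x_0}X\subset\partial^{M_n}_{x_0}X$. *)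

theory Defs
  imports "HOL-Analysis.Analysis"
begin

text \<open>The metric space X is the whole of a type 'a of class metric_space.\<close>

definition proper_mspace :: "'a::metric_space itself \<Rightarrow> bool" where
  "proper_mspace _ \<longleftrightarrow> (\<forall>(x::'a) r. compact (cball x r))"

definition geodesic_mspace :: "'a::metric_space itself \<Rightarrow> bool" where
  "geodesic_mspace _ \<longleftrightarrow> (\<forall>(x::'a) y. \<exists>\<gamma>::real \<Rightarrow> 'a. \<gamma> 0 = x \<and> \<gamma> (dist x y) = y \<and>
      (\<forall>s\<in>{0..dist x y}. \<forall>t\<in>{0..dist x y}. dist (\<gamma> s) (\<gamma> t) = \<bar>s - t\<bar>))"

definition morse_gauge :: "(real \<Rightarrow> real) \<Rightarrow> bool" where
  "morse_gauge M \<longleftrightarrow> mono_on {1..} M \<and> continuous_on {1..} M \<and> (\<forall>Q\<ge>1. M Q \<ge> 0)"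

definition quasi_geodesic :: "real \<Rightarrow> real set \<Rightarrow> (real \<Rightarrow> 'a::metric_space) \<Rightarrow> bool" where
  "quasi_geodesic Q I \<beta> \<longleftrightarrow> Q \<ge> 1 \<and> I \<noteq> {} \<and> is_interval I \<and> closed I \<and>
     (\<forall>u\<in>I. \<forall>v\<in>I. \<bar>u - v\<bar> / Q - Q \<le> dist (\<beta> u) (\<beta> v) \<and> dist (\<beta> u) (\<beta> v) \<le> Q * \<bar>u - v\<bar> + Q)"

definition geodesic :: "real set \<Rightarrow> (real \<Rightarrow> 'a::metric_space) \<Rightarrow> bool" where
  "geodesic I \<gamma> \<longleftrightarrow> I \<noteq> {} \<and> is_interval I \<and> closed I \<and>
     (\<forall>u\<in>I. \<forall>v\<in>I. dist (\<gamma> u) (\<gamma> v) = \<bar>u - v\<bar>)"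

definition morse :: "(real \<Rightarrow> real) \<Rightarrow> real set \<Rightarrow> (real \<Rightarrow> 'a::metric_space) \<Rightarrow> bool" where
  "morse M I \<gamma> \<longleftrightarrow>
     (\<forall>s\<in>I. \<forall>t\<in>I. s \<le> t \<longrightarrow> (\<forall>Q a b (\<beta>::real \<Rightarrow> 'a). a \<le> b \<and> quasi_geodesic Q {a..b} \<beta> \<and>
        \<beta> a = \<gamma> s \<and> \<beta> b = \<gamma> t \<longrightarrow>
        (\<forall>u\<in>{a..b}. infdist (\<beta> u) (\<gamma> ` {s..t}) \<le> M Q)))"

definition closest_proj :: "real set \<Rightarrow> (real \<Rightarrow> 'a::metric_space) \<Rightarrow> 'a \<Rightarrow> 'a set" where
  "closest_proj I \<gamma> x = {p \<in> \<gamma> ` I. dist x p = infdist x (\<gamma> ` I)}"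

definition contracting :: "real \<Rightarrow> real set \<Rightarrow> (real \<Rightarrow> 'a::metric_space) \<Rightarrow> bool" where
  "contracting C I \<gamma> \<longleftrightarrow>
     (\<forall>x. \<forall>p\<in>(\<Union>y\<in>ball x (infdist x (\<gamma> ` I)). closest_proj I \<gamma> y).
          \<forall>q\<in>(\<Union>y\<in>ball x (infdist x (\<gamma> ` I)). closest_proj I \<gamma> y). dist p q \<le> C)"

definition morse_dichotomous :: "'a::metric_space itself \<Rightarrow> bool" where
  "morse_dichotomous _ \<longleftrightarrow> (\<forall>M. morse_gauge M \<longrightarrow>
     (\<exists>C. \<forall>I (\<gamma>::real \<Rightarrow> 'a). geodesic I \<gamma> \<and> morse M I \<gamma> \<longrightarrow> contracting C I \<gamma>))"

definition geod_ray :: "'a::metric_space \<Rightarrow> (real \<Rightarrow> 'a) \<Rightarrow> bool" where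
  "geod_ray x0 \<gamma> \<longleftrightarrow> geodesic {0..} \<gamma> \<and> \<gamma> 0 = x0"

definition morse_ray :: "'a::metric_space \<Rightarrow> (real \<Rightarrow> 'a) \<Rightarrow> bool" where
  "morse_ray x0 \<gamma> \<longleftrightarrow> geod_ray x0 \<gamma> \<and> (\<exists>M. morse_gauge M \<and> morse M {0..} \<gamma>)"

definition bounded_hausdorff :: "'a::metric_space set \<Rightarrow> 'a set \<Rightarrow> bool" where
  "bounded_hausdorff A B \<longleftrightarrow> (\<exists>K. (\<forall>a\<in>A. infdist a B \<le> K) \<and> (\<forall>b\<in>B. infdist b A \<le> K))"

definition ray_class :: "'a::metric_space \<Rightarrow> (real \<Rightarrow> 'a) \<Rightarrow> (real \<Rightarrow> 'a) set" where
  "ray_class x0 \<gamma> = {\<delta>. morse_ray x0 \<delta> \<and> bounded_hausdorff (\<gamma> ` {0..}) (\<delta> ` {0..})}"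

definition morse_boundary :: "'a::metric_space \<Rightarrow> (real \<Rightarrow> 'a) set set" where
  "morse_boundary x0 = {ray_class x0 \<gamma> | \<gamma>. morse_ray x0 \<gamma>}"

definition morse_boundary_M :: "(real \<Rightarrow> real) \<Rightarrow> 'a::metric_space \<Rightarrow> (real \<Rightarrow> 'a) set set" where
  "morse_boundary_M M x0 = {ray_class x0 \<gamma> | \<gamma>. geod_ray x0 \<gamma> \<and> morse M {0..} \<gamma>}"

definition strongly_sigma_compact :: "'a::metric_space \<Rightarrow> bool" where
  "strongly_sigma_compact x0 \<longleftrightarrow> (\<exists>Ms :: nat \<Rightarrow> real \<Rightarrow> real.
     (\<forall>n. morse_gauge (Ms n)) \<and> (\<forall>n. \<forall>Q\<ge>1. Ms n Q \<le> Ms (Suc n) Q) \<and>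
     morse_boundary x0 = (\<Union>n. morse_boundary_M (Ms n) x0) \<and>
     (\<forall>M. morse_gauge M \<longrightarrow> (\<exists>n. morse_boundary_M M x0 \<subseteq> morse_boundary_M (Ms n) x0)))"

end

theory Submission
  imports Defs
begin


lemma geodesic_ray_iso:
  assumes "geodesic {0..} \<gamma>" "u \<ge> 0" "v \<ge> 0"
  shows "dist (\<gamma> u) (\<gamma> v) = \<bar>u - v\<bar>"
  using assms unfolding geodesic_def by auto

lemma infdist_ge_all:
  assumes "A \<noteq> {}" "\<And>a. a \<in> A \<Longrightarrow> d \<le> dist x a"
  shows "d \<le> infdist x A"
  unfolding infdist_notempty[OF assms(1)]
  by (rule cINF_greatest) (use assms in auto)

lemma proj_exists:
  assumes g: "geodesic {0..} \<gamma>"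
  shows "\<exists>p. p \<in> closest_proj {0..} \<gamma> x"
proof -
  define d0 where "d0 = dist x (\<gamma> 0)"
  have cont: "continuous_on {0..2*d0} (\<lambda>v. dist x (\<gamma> v))"
    unfolding continuous_on_iff
  proof (intro ballI allI impI)
    fix v e assume v: "v \<in> {0..2*d0}" and e: "(0::real) < e"
    show "\<exists>d>0. \<forall>v'\<in>{0..2 * d0}. dist v' v < d \<longrightarrow> dist (dist x (\<gamma> v')) (dist x (\<gamma> v)) < e"
    proof (intro exI[of _ e] conjI ballI impI)
      fix v' assume v': "v' \<in> {0..2*d0}" "dist v' v < e"
      have "dist (\<gamma> v') (\<gamma> v) = \<bar>v' - v\<bar>" using geodesic_ray_iso[OF g] v v' by auto
      moreover have "dist (dist x (\<gamma> v')) (dist x (\<gamma> v)) \<le> dist (\<gamma> v') (\<gamma> v)"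
        unfolding dist_real_def by (smt (verit) dist_commute dist_triangle)
      ultimately show "dist (dist x (\<gamma> v')) (dist x (\<gamma> v)) < e" using v' by (auto simp: dist_real_def)
    qed (use e in auto)
  qed
  have ne: "{0..2*d0} \<noteq> {}" using zero_le_dist[of x "\<gamma> 0"] unfolding d0_def by auto
  obtain v0 where v0: "v0 \<in> {0..2*d0}" "\<And>v. v \<in> {0..2*d0} \<Longrightarrow> dist x (\<gamma> v0) \<le> dist x (\<gamma> v)"
    using continuous_attains_inf[OF compact_Icc ne cont] by blast
  have le0: "dist x (\<gamma> v0) \<le> d0" using v0(2)[of 0] ne unfolding d0_def by auto
  have all: "dist x (\<gamma> v0) \<le> dist x (\<gamma> v)" if "v \<ge> 0" for v
  proof (cases "v \<le> 2*d0")
    case True then show ?thesis using v0 that by auto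
  next
    case False
    have "dist (\<gamma> 0) (\<gamma> v) = v" using geodesic_ray_iso[OF g, of 0 v] that by auto
    moreover have "dist (\<gamma> 0) (\<gamma> v) \<le> d0 + dist x (\<gamma> v)" unfolding d0_def
      by (metis dist_commute dist_triangle)
    ultimately show ?thesis using False le0 by auto
  qed
  have "infdist x (\<gamma> ` {0..}) = dist x (\<gamma> v0)"
  proof (rule antisym)
    show "infdist x (\<gamma> ` {0..}) \<le> dist x (\<gamma> v0)" using v0(1) by (intro infdist_le) auto
    show "dist x (\<gamma> v0) \<le> infdist x (\<gamma> ` {0..})" using all by (intro infdist_ge_all) auto
  qed
  then show ?thesis using v0(1) unfolding closest_proj_def by auto
qed


lemma path_bound:
  fixes x :: "nat \<Rightarrow> 'a::metric_space"
  assumes "\<And>k. i \<le> k \<Longrightarrow> k < j \<Longrightarrow> dist (x k) (x (Suc k)) \<le> S"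
  shows "i \<le> j \<Longrightarrow> dist (x i) (x j) \<le> real (j - i) * S"
  using assms
proof (induction j)
  case 0 then show ?case by auto
next
  case (Suc j)
  show ?case
  proof (cases "i = Suc j")
    case True then show ?thesis by auto
  next
    case False
    then have ij: "i \<le> j" using Suc by auto
    have "dist (x i) (x j) \<le> real (j - i) * S" using Suc ij by auto
    moreover have "dist (x j) (x (Suc j)) \<le> S" using Suc ij by auto
    moreover have "dist (x i) (x (Suc j)) \<le> dist (x i) (x j) + dist (x j) (x (Suc j))"
      by (rule dist_triangle)
    moreover have "real (Suc j - i) * S = real (j - i) * S + S" using ij
      by (simp add: Suc_diff_le algebra_simps)
    ultimately show ?thesis by linarith
  qed
qed

lemma discrete1:
  fixes x :: "nat \<Rightarrow> 'a::metric_space" and P :: "'a \<Rightarrow> 'a" and dG :: "'a \<Rightarrow> real"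
  assumes step: "\<And>k. k < n \<Longrightarrow> dist (x k) (x (Suc k)) \<le> S"
    and lower: "\<And>i j. i \<le> j \<Longrightarrow> j \<le> n \<Longrightarrow> real (j - i) * \<alpha> - \<beta> \<le> dist (x i) (x j)"
    and e0: "dG (x 0) \<le> D" and en: "dG (x n) \<le> D"
    and Pd: "\<And>y. dist y (P y) = dG y"
    and lip: "\<And>y z. dG y \<le> dist y z + dG z"
    and contr: "\<And>y z. dist z y < dG z \<Longrightarrow> dist (P y) (P z) \<le> C"
    and SD: "S < D" and kap: "\<kappa> * (\<alpha> - C) \<ge> 1" and kpos: "\<kappa> \<ge> 0" and Spos: "S \<ge> 0"
    and i: "i \<le> n"
  shows "dG (x i) \<le> S * (2 * D + \<beta>) * \<kappa> + D"
proof (cases "dG (x i) \<le> D")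
  case True
  have "0 \<le> S * (2 * D + \<beta>) * \<kappa>"
  proof -
    have "0 \<le> dist (x 0) (x 0)" by simp
    then have "0 \<le> 2 * D + \<beta>" using lower[of 0 0] e0 Pd[of "x 0"] zero_le_dist[of "x 0" "P (x 0)"] by auto
    then show ?thesis using Spos kpos by auto
  qed
  then show ?thesis using True by auto
next
  case False
  define A where "A = {k. k \<le> i \<and> dG (x k) \<le> D}"
  define i1 where "i1 = Greatest (\<lambda>k. k \<in> A)"
  have "0 \<in> A" using e0 unfolding A_def by auto
  have finA: "finite A" unfolding A_def by auto
  have bA: "\<And>y. y \<in> A \<Longrightarrow> y \<le> i" unfolding A_def by blast
  have i1A: "i1 \<in> A" unfolding i1_def by (rule GreatestI_nat[of "\<lambda>k. k \<in> A" 0 i, OF \<open>0 \<in> A\<close> bA])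
  have i1max: "k \<le> i1" if "k \<in> A" for k unfolding i1_def
    by (rule Greatest_le_nat[of "\<lambda>k. k \<in> A" k i, OF that bA])
  define B where "B = {k. i \<le> k \<and> k \<le> n \<and> dG (x k) \<le> D}"
  define i2 where "i2 = Least (\<lambda>k. k \<in> B)"
  have "n \<in> B" using en i unfolding B_def by auto
  have i2B: "i2 \<in> B" unfolding i2_def by (rule LeastI[of "\<lambda>k. k \<in> B" n, OF \<open>n \<in> B\<close>])
  have i2min: "i2 \<le> k" if "k \<in> B" for k unfolding i2_def by (rule Least_le[of "\<lambda>k. k \<in> B" k, OF that])
  have i1i: "i1 < i" using i1A False unfolding A_def by (cases "i1 = i") auto
  have ii2: "i < i2" using i2B False unfolding B_def by (cases "i2 = i") auto
  have i2n: "i2 \<le> n" using i2B unfolding B_def by auto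
  have interior: "D < dG (x k)" if "i1 < k" "k < i2" for k
  proof (cases "k \<le> i")
    case True
    show ?thesis using i1max[of k] that True unfolding A_def by force
  next
    case False
    show ?thesis using i2min[of k] that False i2n unfolding B_def by force
  qed
  have stepP: "dist (P (x k)) (P (x (Suc k))) \<le> C" if "i1 \<le> k" "Suc k \<le> i2" for k
  proof (cases "k = i1")
    case True
    then have "D < dG (x (Suc k))" using interior[of "Suc k"] i1i ii2 that by auto
    moreover have "dist (x (Suc k)) (x k) \<le> S" using step[of k] that i2n by (simp add: dist_commute)
    ultimately show ?thesis using contr[of "x (Suc k)" "x k"] SD by (simp add: dist_commute)
  next
    case False
    then have "D < dG (x k)" using interior[of k] that by auto
    moreover have "dist (x k) (x (Suc k)) \<le> S" using step[of k] that i2n by simp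
    ultimately show ?thesis using contr[of "x k" "x (Suc k)"] SD by (simp add: dist_commute)
  qed
  have Pbound: "dist (P (x i1)) (P (x (i1 + m))) \<le> real m * C" if "i1 + m \<le> i2" for m
    using that
  proof (induction m)
    case 0 then show ?case by simp
  next
    case (Suc m)
    have "dist (P (x i1)) (P (x (i1 + Suc m))) \<le> dist (P (x i1)) (P (x (i1 + m))) + dist (P (x (i1 + m))) (P (x (Suc (i1 + m))))"
      by (simp add: dist_triangle)
    moreover have "dist (P (x (i1 + m))) (P (x (Suc (i1 + m)))) \<le> C" using stepP[of "i1 + m"] Suc.prems by auto
    ultimately show ?case using Suc by (simp add: algebra_simps)
  qed
  define m where "m = i2 - i1"
  have i2eq: "i2 = i1 + m" using i1i ii2 unfolding m_def by auto
  have PP: "dist (P (x i1)) (P (x i2)) \<le> real m * C" using Pbound[of m] i2eq by auto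
  have d1: "dist (x i1) (P (x i1)) \<le> D" using Pd i1A unfolding A_def by auto
  have d2: "dist (x i2) (P (x i2)) \<le> D" using Pd i2B unfolding B_def by auto
  have "dist (x i1) (x i2) \<le> dist (x i1) (P (x i1)) + dist (P (x i1)) (P (x i2)) + dist (P (x i2)) (x i2)"
  proof -
    have "dist (x i1) (x i2) \<le> dist (x i1) (P (x i1)) + dist (P (x i1)) (x i2)" by (rule dist_triangle)
    moreover have "dist (P (x i1)) (x i2) \<le> dist (P (x i1)) (P (x i2)) + dist (P (x i2)) (x i2)" by (rule dist_triangle)
    ultimately show ?thesis by linarith
  qed
  then have up: "dist (x i1) (x i2) \<le> 2 * D + real m * C" using PP d1 d2 by (simp add: dist_commute)
  have lo: "real m * \<alpha> - \<beta> \<le> dist (x i1) (x i2)" using lower[of i1 i2] i1i ii2 i2n unfolding m_def by auto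
  have m1: "real m * (\<alpha> - C) \<le> 2 * D + \<beta>" using up lo by (simp add: algebra_simps)
  have mle: "real m \<le> (2 * D + \<beta>) * \<kappa>"
  proof -
    have "real m \<le> real m * (\<kappa> * (\<alpha> - C))" using kap by (simp add: mult_le_cancel_left1)
    also have "\<dots> = \<kappa> * (real m * (\<alpha> - C))" by simp
    also have "\<dots> \<le> \<kappa> * (2 * D + \<beta>)" using m1 kpos by (rule mult_left_mono)
    finally show ?thesis by (simp add: mult.commute)
  qed
  have "dist (x i1) (x i) \<le> real (i - i1) * S"
    using path_bound[of i1 i x S] step i1i ii2 i2n by auto
  also have "\<dots> \<le> real m * S" using Spos i1i ii2 unfolding m_def by (intro mult_right_mono) auto
  also have "\<dots> \<le> (2 * D + \<beta>) * \<kappa> * S" using mle Spos by (rule mult_right_mono)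
  finally have "dist (x i1) (x i) \<le> S * (2 * D + \<beta>) * \<kappa>" by (simp add: algebra_simps)
  moreover have "dG (x i) \<le> dist (x i) (x i1) + dG (x i1)" by (rule lip)
  moreover have "dG (x i1) \<le> D" using i1A unfolding A_def by auto
  ultimately show ?thesis by (simp add: dist_commute)
qed


lemma count_bound:
  fixes m :: nat
  assumes "\<kappa> * \<alpha> \<ge> 1" "\<kappa> \<ge> 0" "real m * \<alpha> - \<beta> \<le> E"
  shows "real m \<le> (E + \<beta>) * \<kappa>"
proof -
  have "real m \<le> real m * (\<kappa> * \<alpha>)" using assms(1) by (simp add: mult_le_cancel_left1)
  also have "\<dots> = \<kappa> * (real m * \<alpha>)" by simp
  also have "\<dots> \<le> \<kappa> * (E + \<beta>)" using assms(3) assms(2) by (intro mult_left_mono) auto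
  finally show ?thesis by (simp add: mult.commute)
qed

lemma discrete2:
  fixes x :: "nat \<Rightarrow> 'a::metric_space" and \<gamma> :: "real \<Rightarrow> 'a"
  assumes step: "\<And>k. k < n \<Longrightarrow> dist (x k) (x (Suc k)) \<le> S"
    and lower: "\<And>i j. i \<le> j \<Longrightarrow> j \<le> n \<Longrightarrow> real (j - i) * \<alpha> - \<beta> \<le> dist (x i) (x j)"
    and g: "geodesic {0..} \<gamma>"
    and near: "\<And>i. i \<le> n \<Longrightarrow> \<exists>v\<ge>0. dist (x i) (\<gamma> v) \<le> B"
    and x0: "x 0 = \<gamma> s" and xn: "x n = \<gamma> t" and st: "0 \<le> s" "s \<le> t"
    and kap: "\<kappa> * \<alpha> \<ge> 1" and kpos: "\<kappa> \<ge> 0" and Spos: "S \<ge> 0" and Bpos: "B \<ge> 0"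
    and i: "i \<le> n"
  shows "\<exists>w\<in>{s..t}. dist (x i) (\<gamma> w) \<le> B + S * (B + (2 * B + S) + \<beta>) * \<kappa>"
proof -
  define J where "J = 2 * B + S"
  define K where "K = S * (B + J + \<beta>) * \<kappa>"
  have iso: "dist (\<gamma> u) (\<gamma> w) = \<bar>u - w\<bar>" if "u \<ge> 0" "w \<ge> 0" for u w
    using g that unfolding geodesic_def by auto
  have bpos: "\<beta> \<ge> 0" using lower[of 0 0] by auto
  have Kpos: "K \<ge> 0" unfolding K_def J_def using Spos Bpos bpos kpos by auto
  have ex: "\<forall>k. \<exists>w. k \<le> n \<longrightarrow> (w \<ge> 0 \<and> dist (x k) (\<gamma> w) \<le> B \<and> (k = 0 \<longrightarrow> w = s) \<and> (k = n \<longrightarrow> w = t))"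
  proof
    fix k
    show "\<exists>w. k \<le> n \<longrightarrow> (w \<ge> 0 \<and> dist (x k) (\<gamma> w) \<le> B \<and> (k = 0 \<longrightarrow> w = s) \<and> (k = n \<longrightarrow> w = t))"
    proof (cases "k = 0")
      case True
      have "n = 0 \<longrightarrow> s = t" using iso[of s t] x0 xn st by auto
      then show ?thesis using True x0 st Bpos by (intro exI[of _ s]) auto
    next
      case False
      show ?thesis
      proof (cases "k = n")
        case True then show ?thesis using False xn st Bpos by (intro exI[of _ t]) auto
      next
        case F2: False
        show ?thesis
        proof (cases "k \<le> n")
          case True
          then obtain w where "w \<ge> 0" "dist (x k) (\<gamma> w) \<le> B" using near by blast
          then show ?thesis using False F2 by (intro exI[of _ w]) auto
        qed auto
      qed
    qed
  qed
  then obtain v where v: "\<And>k. k \<le> n \<Longrightarrow> v k \<ge> 0 \<and> dist (x k) (\<gamma> (v k)) \<le> B \<and> (k = 0 \<longrightarrow> v k = s) \<and> (k = n \<longrightarrow> v k = t)"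
    by metis
  have v0: "v 0 = s" using v[of 0] by auto
  have vn: "v n = t" using v[of n] by auto
  have jump: "\<bar>v (Suc k) - v k\<bar> \<le> J" if "k < n" for k
  proof -
    have "dist (\<gamma> (v (Suc k))) (\<gamma> (v k)) \<le> dist (\<gamma> (v (Suc k))) (x (Suc k)) + dist (x (Suc k)) (\<gamma> (v k))"
      by (rule dist_triangle)
    moreover have "dist (x (Suc k)) (\<gamma> (v k)) \<le> dist (x (Suc k)) (x k) + dist (x k) (\<gamma> (v k))"
      by (rule dist_triangle)
    moreover have "dist (x (Suc k)) (x k) \<le> S" using step[OF that] by (simp add: dist_commute)
    moreover have "dist (\<gamma> (v (Suc k))) (x (Suc k)) \<le> B" using v[of "Suc k"] that by (simp add: dist_commute)
    moreover have "dist (x k) (\<gamma> (v k)) \<le> B" using v[of k] that by simp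
    moreover have "dist (\<gamma> (v (Suc k))) (\<gamma> (v k)) = \<bar>v (Suc k) - v k\<bar>" using v[of k] v[of "Suc k"] that iso by auto
    ultimately show ?thesis unfolding J_def by linarith
  qed
  consider "s \<le> v i \<and> v i \<le> t" | "t < v i" | "v i < s" by linarith
  then show ?thesis
  proof cases
    case 1
    then show ?thesis using v[OF i] Kpos unfolding K_def J_def by (intro bexI[of _ "v i"]) auto
  next
    case 2
    define A where "A = {k. k \<le> i \<and> v k \<le> t}"
    define j where "j = Greatest (\<lambda>k. k \<in> A)"
    have "0 \<in> A" using v0 st unfolding A_def by auto
    have bA: "\<And>y. y \<in> A \<Longrightarrow> y \<le> i" unfolding A_def by blast
    have jA: "j \<in> A" unfolding j_def by (rule GreatestI_nat[of "\<lambda>k. k \<in> A" 0 i, OF \<open>0 \<in> A\<close> bA])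
    have jmax: "k \<le> j" if "k \<in> A" for k unfolding j_def
      by (rule Greatest_le_nat[of "\<lambda>k. k \<in> A" k i, OF that bA])
    have ji: "j < i" using jA 2 unfolding A_def by (cases "j = i") auto
    have "\<not> Suc j \<in> A" using jmax[of "Suc j"] by auto
    then have vsj: "t < v (Suc j)" using ji unfolding A_def by auto
    have "\<bar>v (Suc j) - v j\<bar> \<le> J" using jump[of j] ji i by auto
    moreover have "v j \<le> t" using jA unfolding A_def by auto
    ultimately have vjt: "\<bar>v j - t\<bar> \<le> J" using vsj by linarith
    have "dist (x j) (x n) \<le> dist (x j) (\<gamma> (v j)) + dist (\<gamma> (v j)) (\<gamma> t)"
      using xn dist_triangle by metis
    moreover have "dist (\<gamma> (v j)) (\<gamma> t) = \<bar>v j - t\<bar>" using iso[of "v j" t] v[of j] ji i st by auto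
    moreover have "dist (x j) (\<gamma> (v j)) \<le> B" using v[of j] ji i by auto
    ultimately have "dist (x j) (x n) \<le> B + J" using vjt by linarith
    then have "real (n - j) * \<alpha> - \<beta> \<le> B + J" using lower[of j n] ji i by auto
    then have nj: "real (n - j) \<le> (B + J + \<beta>) * \<kappa>" using count_bound[OF kap kpos] by blast
    have "dist (x i) (x n) \<le> real (n - i) * S" using path_bound[of i n x S] step i by auto
    also have "\<dots> \<le> real (n - j) * S" using Spos ji by (intro mult_right_mono) auto
    also have "\<dots> \<le> (B + J + \<beta>) * \<kappa> * S" using nj Spos by (rule mult_right_mono)
    finally have "dist (x i) (\<gamma> t) \<le> K" using xn unfolding K_def by (simp add: algebra_simps)
    then show ?thesis using st Bpos unfolding K_def J_def by (intro bexI[of _ t]) auto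
  next
    case 3
    define A where "A = {k. i \<le> k \<and> k \<le> n \<and> s \<le> v k}"
    define j where "j = Least (\<lambda>k. k \<in> A)"
    have "n \<in> A" using vn st i unfolding A_def by auto
    have jA: "j \<in> A" unfolding j_def by (rule LeastI[of "\<lambda>k. k \<in> A" n, OF \<open>n \<in> A\<close>])
    have jmin: "j \<le> k" if "k \<in> A" for k unfolding j_def by (rule Least_le[of "\<lambda>k. k \<in> A" k, OF that])
    have ij: "i < j" using jA 3 unfolding A_def by (cases "j = i") auto
    have jn: "j \<le> n" using jA unfolding A_def by auto
    obtain j' where j': "j = Suc j'" using ij by (cases j) auto
    have "\<not> j' \<in> A" using jmin[of j'] j' by auto
    then have vsj: "v j' < s" using ij j' jn unfolding A_def by auto
    have "\<bar>v (Suc j') - v j'\<bar> \<le> J" using jump[of j'] j' jn by auto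
    moreover have "s \<le> v j" using jA unfolding A_def by auto
    ultimately have vjt: "\<bar>v j - s\<bar> \<le> J" using vsj j' by auto
    have "dist (x 0) (x j) \<le> dist (\<gamma> s) (\<gamma> (v j)) + dist (\<gamma> (v j)) (x j)"
      using x0 dist_triangle by metis
    moreover have "dist (\<gamma> s) (\<gamma> (v j)) = \<bar>v j - s\<bar>" using iso[of s "v j"] v[of j] jn st by auto
    moreover have "dist (\<gamma> (v j)) (x j) \<le> B" using v[of j] jn by (auto simp: dist_commute)
    ultimately have "dist (x 0) (x j) \<le> B + J" using vjt by linarith
    then have "real (j - 0) * \<alpha> - \<beta> \<le> B + J" using lower[of 0 j] jn by auto
    then have nj: "real (j - 0) \<le> (B + J + \<beta>) * \<kappa>" using count_bound[OF kap kpos] by blast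
    have "dist (x 0) (x i) \<le> real (i - 0) * S" using path_bound[of 0 i x S] step i by auto
    also have "\<dots> \<le> real (j - 0) * S" using Spos ij by (intro mult_right_mono) auto
    also have "\<dots> \<le> (B + J + \<beta>) * \<kappa> * S" using nj Spos by (rule mult_right_mono)
    finally have "dist (x i) (\<gamma> s) \<le> K" using x0 unfolding K_def by (simp add: algebra_simps dist_commute)
    then show ?thesis using st Bpos unfolding K_def J_def by (intro bexI[of _ s]) auto
  qed
qed


definition gauge :: "real \<Rightarrow> real \<Rightarrow> real" where
  "gauge C Q = (let h = 2*C*Q+1; S = Q*h+Q; D = S+1; bb = 2*C+1+Q; B1 = S*(2*D+bb)*Q + D;
     J = 2*B1+S in S + (B1 + S*(B1 + J + bb)*Q))"

lemma gauge_mono: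
  assumes "0 \<le> C" "C \<le> C'" "1 \<le> Q" "Q \<le> Q'"
  shows "gauge C Q \<le> gauge C' Q'"
proof -
  define h where "h = 2*C*Q+1"
  define h' where "h' = 2*C'*Q'+1"
  have Q0: "0 \<le> Q" using assms by auto
  have C'0: "0 \<le> C'" using assms by auto
  have hh: "h \<le> h'" "0 \<le> h" unfolding h_def h'_def using assms
    by (auto intro!: mult_mono)
  define S where "S = Q*h+Q" define S' where "S' = Q'*h'+Q'"
  have SS: "S \<le> S'" "0 \<le> S" unfolding S_def S'_def using hh assms Q0 by (auto intro!: add_mono mult_mono)
  define D where "D = S+1" define D' where "D' = S'+1"
  define bb where "bb = 2*C+1+Q" define bb' where "bb' = 2*C'+1+Q'"
  have DD: "D \<le> D'" "0 \<le> D" "bb \<le> bb'" "0 \<le> bb" unfolding D_def D'_def bb_def bb'_def using SS assms by auto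
  define B1 where "B1 = S*(2*D+bb)*Q + D" define B1' where "B1' = S'*(2*D'+bb')*Q' + D'"
  have BB: "B1 \<le> B1'" "0 \<le> B1" unfolding B1_def B1'_def using SS DD assms Q0
    by (auto intro!: add_mono mult_mono)
  define J where "J = 2*B1+S" define J' where "J' = 2*B1'+S'"
  have JJ: "J \<le> J'" "0 \<le> J" unfolding J_def J'_def using BB SS by auto
  have "S + (B1 + S*(B1 + J + bb)*Q) \<le> S' + (B1' + S'*(B1' + J' + bb')*Q')"
    using SS BB JJ DD assms Q0 by (auto intro!: add_mono mult_mono)
  then show ?thesis unfolding gauge_def Let_def h_def h'_def S_def S'_def D_def D'_def bb_def bb'_def
      B1_def B1'_def J_def J'_def by simp
qed

lemma gauge_morse_gauge:
  assumes "0 \<le> C"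
  shows "morse_gauge (gauge C)"
  unfolding morse_gauge_def
proof (intro conjI allI impI)
  show "mono_on {1..} (gauge C)" by (rule mono_onI) (use gauge_mono assms in auto)
  show "continuous_on {1..} (gauge C)" unfolding gauge_def Let_def by (intro continuous_intros)
  fix Q :: real assume "1 \<le> Q"
  then show "0 \<le> gauge C Q" unfolding gauge_def Let_def using assms by (auto intro!: add_nonneg_nonneg mult_nonneg_nonneg)
qed


lemma contracting_morse:
  fixes \<gamma> :: "real \<Rightarrow> 'a::metric_space"
  assumes g: "geodesic {0..} \<gamma>" and c: "contracting C {0..} \<gamma>" and C0: "0 \<le> C"
  shows "morse (gauge C) {0..} \<gamma>"
  unfolding morse_def
proof (intro ballI impI allI)
  fix s t Q a b and \<beta> :: "real \<Rightarrow> 'a" and u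
  assume s: "s \<in> {0::real..}" and t: "t \<in> {0::real..}" and st: "s \<le> t"
    and H: "a \<le> b \<and> quasi_geodesic Q {a..b} \<beta> \<and> \<beta> a = \<gamma> s \<and> \<beta> b = \<gamma> t"
    and u: "u \<in> {a..b}"
  have ab: "a \<le> b" and Q1: "1 \<le> Q" and ba: "\<beta> a = \<gamma> s" and bb: "\<beta> b = \<gamma> t"
    using H unfolding quasi_geodesic_def by auto
  have qb: "\<And>u v. u \<in> {a..b} \<Longrightarrow> v \<in> {a..b} \<Longrightarrow> \<bar>u - v\<bar> / Q - Q \<le> dist (\<beta> u) (\<beta> v) \<and> dist (\<beta> u) (\<beta> v) \<le> Q * \<bar>u - v\<bar> + Q"
    using H unfolding quasi_geodesic_def by blast
  define h where "h = 2*C*Q+1"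
  define S where "S = Q*h+Q"
  define D where "D = S+1"
  define bt where "bt = 2*C+1+Q"
  define B1 where "B1 = S*(2*D+bt)*Q + D"
  define J where "J = 2*B1+S"
  have gQ: "gauge C Q = S + (B1 + S*(B1 + J + bt)*Q)"
    unfolding gauge_def Let_def h_def S_def D_def bt_def B1_def J_def by simp
  have h1: "1 \<le> h" unfolding h_def using C0 Q1 by auto
  have hpos: "0 < h" using h1 by auto
  have Spos: "0 \<le> S" unfolding S_def using Q1 h1 by auto
  define \<alpha> where "\<alpha> = h / Q"
  have Qa: "Q * \<alpha> = h" unfolding \<alpha>_def using Q1 by auto
  have a_le: "\<alpha> \<le> 2*C+1"
  proof -
    have "\<alpha> = 2*C + 1/Q" unfolding \<alpha>_def h_def using Q1 by (simp add: field_simps)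
    moreover have "1/Q \<le> 1" using Q1 by auto
    ultimately show ?thesis by auto
  qed
  have kap1: "Q * (\<alpha> - C) \<ge> 1" using Qa Q1 C0 unfolding h_def
    by (simp add: right_diff_distrib)
  define n where "n = nat \<lceil>(b - a) / h\<rceil>"
  define p where "p k = min (a + real k * h) b" for k
  define x where "x k = \<beta> (p k)" for k
  have pin: "p k \<in> {a..b}" for k unfolding p_def using ab hpos by auto
  have nge: "(b - a) / h \<le> real n" unfolding n_def by linarith
  have nle: "real n \<le> (b - a) / h + 1"
  proof -
    have "0 \<le> (b - a) / h" using ab hpos by auto
    then have "real n = of_int \<lceil>(b - a) / h\<rceil>" unfolding n_def by simp
    then show ?thesis using ceiling_correct[of "(b - a) / h"] by linarith
  qed
  from nge have "b - a \<le> real n * h" using hpos by (simp add: field_simps)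
  then have pn: "p n = b" unfolding p_def by auto
  have p0: "p 0 = a" unfolding p_def using ab by auto
  have x0: "x 0 = \<gamma> s" unfolding x_def p0 ba by simp
  have xn: "x n = \<gamma> t" unfolding x_def pn bb by simp
  have step: "dist (x k) (x (Suc k)) \<le> S" for k
  proof -
    have "\<bar>p k - p (Suc k)\<bar> \<le> h" unfolding p_def using hpos by (auto simp: algebra_simps)
    then have "Q * \<bar>p k - p (Suc k)\<bar> + Q \<le> S" unfolding S_def using Q1 by (auto intro: mult_left_mono)
    then show ?thesis using qb[OF pin pin, of k "Suc k"] unfolding x_def by linarith
  qed
  have lower: "real (j - i) * \<alpha> - bt \<le> dist (x i) (x j)" if "i \<le> j" "j \<le> n" for i j
  proof (cases "i = j")
    case True then show ?thesis unfolding bt_def using C0 Q1 by auto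
  next
    case False
    then have ij: "i < j" using that by auto
    have "a + (real j - 1) * h \<le> p j"
    proof -
      have "real j - 1 \<le> (b - a) / h" using that(2) nle by linarith
      then have "(real j - 1) * h \<le> b - a" using hpos by (simp add: field_simps)
      moreover have "(real j - 1) * h \<le> real j * h" using hpos by auto
      ultimately show ?thesis unfolding p_def by auto
    qed
    moreover have "p i \<le> a + real i * h" unfolding p_def by auto
    ultimately have "(real j - real i - 1) * h \<le> \<bar>p i - p j\<bar>" by (auto simp: algebra_simps)
    then have "(real j - real i - 1) * h / Q \<le> \<bar>p i - p j\<bar> / Q" using Q1 by (auto intro: divide_right_mono)
    moreover have "(real j - real i - 1) * h / Q = (real (j - i)) * \<alpha> - \<alpha>" unfolding \<alpha>_def using ij Q1
      by (simp add: field_simps of_nat_diff)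
    moreover have "\<bar>p i - p j\<bar> / Q - Q \<le> dist (x i) (x j)" using qb[OF pin pin, of i j] unfolding x_def by auto
    ultimately show ?thesis using a_le unfolding bt_def by linarith
  qed
  define G where "G = \<gamma> ` {0..}"
  define P where "P y = (SOME q. q \<in> closest_proj {0..} \<gamma> y)" for y
  have Pin: "P y \<in> closest_proj {0..} \<gamma> y" for y unfolding P_def using proj_exists[OF g] by (metis someI_ex)
  have Pd: "dist y (P y) = infdist y G" for y using Pin[of y] unfolding closest_proj_def G_def by auto
  have PG: "P y \<in> G" for y using Pin[of y] unfolding closest_proj_def G_def by auto
  have contr: "dist (P y) (P z) \<le> C" if "dist z y < infdist z G" for y z
  proof -
    have yb: "y \<in> ball z (infdist z (\<gamma> ` {0..}))" using that unfolding G_def by auto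
    have zb: "z \<in> ball z (infdist z (\<gamma> ` {0..}))" proof -
      have "0 < infdist z G" using that zero_le_dist[of z y] by linarith
      then show ?thesis unfolding G_def by simp
    qed
    show ?thesis using c unfolding contracting_def using Pin[of y] Pin[of z] yb zb by blast
  qed
  have e0: "infdist (x 0) G \<le> D" unfolding x0 G_def D_def using s Spos by auto
  have en: "infdist (x n) G \<le> D" unfolding xn G_def D_def using t Spos by auto
  have near1: "infdist (x i) G \<le> S * (2 * D + bt) * Q + D" if "i \<le> n" for i
    by (rule discrete1[of n x S \<alpha> bt "\<lambda>y. infdist y G" D P C Q i])
       (use step lower e0 en Pd infdist_triangle contr kap1 Q1 Spos that in \<open>auto simp: D_def add.commute\<close>)
  have near: "\<exists>v\<ge>0. dist (x i) (\<gamma> v) \<le> B1" if "i \<le> n" for i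
  proof -
    obtain v where "v \<ge> 0" "P (x i) = \<gamma> v" using PG[of "x i"] unfolding G_def by auto
    then show ?thesis using near1[OF that] Pd[of "x i"] unfolding B1_def by auto
  qed
  have B1pos: "0 \<le> B1" unfolding B1_def D_def bt_def using Spos Q1 C0 by auto
  define i where "i = nat \<lfloor>(u - a) / h\<rfloor>"
  have ua: "0 \<le> (u - a) / h" using u hpos by auto
  have iu: "real i \<le> (u - a) / h" "(u - a) / h < real i + 1" unfolding i_def using ua by linarith+
  have "(u - a) / h \<le> (b - a) / h" using u hpos by (auto intro: divide_right_mono)
  then have "real i \<le> real n" using iu nge by linarith
  then have i_n: "i \<le> n" by simp
  have "real i * h \<le> u - a" "u - a < real i * h + h" using iu hpos by (auto simp: field_simps)
  then have pi: "p i = a + real i * h" and "\<bar>u - p i\<bar> \<le> h" using u unfolding p_def by auto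
  then have "Q * \<bar>u - p i\<bar> + Q \<le> S" unfolding S_def using Q1 by (auto intro: mult_left_mono)
  then have du: "dist (\<beta> u) (x i) \<le> S" using qb[OF u pin, of i] unfolding x_def by linarith
  obtain w where w: "w \<in> {s..t}" "dist (x i) (\<gamma> w) \<le> B1 + S * (B1 + (2 * B1 + S) + bt) * Q"
    using discrete2[of n x S \<alpha> bt \<gamma> B1 s t Q i] step lower g near x0 xn s st Qa h1 Q1 Spos B1pos i_n by auto
  have "infdist (\<beta> u) (\<gamma> ` {s..t}) \<le> dist (\<beta> u) (\<gamma> w)" using w(1) by (intro infdist_le) auto
  also have "\<dots> \<le> dist (\<beta> u) (x i) + dist (x i) (\<gamma> w)" by (rule dist_triangle)
  also have "\<dots> \<le> gauge C Q" using du w(2) unfolding gQ J_def by linarith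
  finally show "infdist (\<beta> u) (\<gamma> ` {s..t}) \<le> gauge C Q" .
qed


lemma contracting_mono: "contracting C I \<gamma> \<Longrightarrow> C \<le> C' \<Longrightarrow> contracting C' I \<gamma>"
  unfolding contracting_def by (meson order_trans)

lemma key:
  assumes md: "morse_dichotomous TYPE('a::metric_space)" and M: "morse_gauge M"
  shows "\<exists>n. \<forall>\<gamma>::real \<Rightarrow> 'a. geodesic {0..} \<gamma> \<and> morse M {0..} \<gamma> \<longrightarrow> morse (gauge (real n)) {0..} \<gamma>"
proof -
  obtain C where C: "\<And>I (\<gamma>::real \<Rightarrow> 'a). geodesic I \<gamma> \<and> morse M I \<gamma> \<Longrightarrow> contracting C I \<gamma>"
    using md M unfolding morse_dichotomous_def by blast
  have "C \<le> real (nat \<lceil>C\<rceil>)" by linarith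
  then show ?thesis
    using C contracting_mono contracting_morse by (metis of_nat_0_le_iff)
qed

theorem corollary2p15:
  fixes x0 :: "'a::metric_space"
  assumes "proper_mspace TYPE('a)" and "geodesic_mspace TYPE('a)"
    and "morse_dichotomous TYPE('a)"
  shows "strongly_sigma_compact x0"
  unfolding strongly_sigma_compact_def
proof (intro exI[of _ "\<lambda>n. gauge (real n)"] conjI allI impI)
  fix n :: nat
  show "morse_gauge (gauge (real n))" by (rule gauge_morse_gauge) simp
next
  fix n :: nat and Q :: real assume "1 \<le> Q"
  then show "gauge (real n) Q \<le> gauge (real (Suc n)) Q" by (intro gauge_mono) auto
next
  show "morse_boundary x0 = (\<Union>n. morse_boundary_M (gauge (real n)) x0)"
  proof
    show "morse_boundary x0 \<subseteq> (\<Union>n. morse_boundary_M (gauge (real n)) x0)"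
    proof
      fix c assume "c \<in> morse_boundary x0"
      then obtain \<gamma> M where c: "c = ray_class x0 \<gamma>" and r: "geod_ray x0 \<gamma>" "morse_gauge M" "morse M {0..} \<gamma>"
        unfolding morse_boundary_def morse_ray_def by auto
      obtain n where "\<And>\<gamma>::real \<Rightarrow> 'a. geodesic {0..} \<gamma> \<and> morse M {0..} \<gamma> \<Longrightarrow> morse (gauge (real n)) {0..} \<gamma>"
        using key[OF assms(3) r(2)] by blast
      then have "morse (gauge (real n)) {0..} \<gamma>" using r unfolding geod_ray_def by auto
      then show "c \<in> (\<Union>n. morse_boundary_M (gauge (real n)) x0)"
        using c r(1) unfolding morse_boundary_M_def by blast
    qed
    show "(\<Union>n. morse_boundary_M (gauge (real n)) x0) \<subseteq> morse_boundary x0"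
    proof
      fix c assume "c \<in> (\<Union>n. morse_boundary_M (gauge (real n)) x0)"
      then obtain n \<gamma> where "c = ray_class x0 \<gamma>" "geod_ray x0 \<gamma>" "morse (gauge (real n)) {0..} \<gamma>"
        unfolding morse_boundary_M_def by auto
      moreover have "morse_gauge (gauge (real n))" by (rule gauge_morse_gauge) simp
      ultimately show "c \<in> morse_boundary x0" unfolding morse_boundary_def morse_ray_def by blast
    qed
  qed
next
  fix M assume M: "morse_gauge M"
  obtain n where n: "\<And>\<gamma>::real \<Rightarrow> 'a. geodesic {0..} \<gamma> \<and> morse M {0..} \<gamma> \<Longrightarrow> morse (gauge (real n)) {0..} \<gamma>"
    using key[OF assms(3) M] by blast
  show "\<exists>n. morse_boundary_M M x0 \<subseteq> morse_boundary_M (gauge (real n)) x0"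
  proof (intro exI[of _ n] subsetI)
    fix c assume "c \<in> morse_boundary_M M x0"
    then obtain \<gamma> where "c = ray_class x0 \<gamma>" "geod_ray x0 \<gamma>" "morse M {0..} \<gamma>"
      unfolding morse_boundary_M_def by auto
    then show "c \<in> morse_boundary_M (gauge (real n)) x0"
      using n unfolding morse_boundary_M_def geod_ray_def by blast
  qed
qed

end
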